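(* Let $\boldsymbol{\beta}\in\mathbb{R}^q$ be fixed, let $\boldsymbol{x}_1,\dots,\boldsymbol{x}_r$ be fixed covariate vectors, and let $h(\boldsymbol{x},\boldsymbol{\beta})\in(0,1)$ be a known function differentiable in $\boldsymbol{\beta}$, with gradient $\nabla_{\boldsymbol{\beta}}h(\boldsymbol{x},\boldsymbol{\beta})$ (a column vector). For $\mu>0$ define the $(q+1)\times(q+1)$ Fisher information matrix $$I_r(\boldsymbol{\beta},\mu)=\begin{bmatrix}\sum_{i=1}^r\frac{\mu\,\nabla_{\boldsymbol{\beta}}h(\boldsymbol{x}_i,\boldsymbol{\beta})\nabla_{\boldsymbol{\beta}}'h(\boldsymbol{x}_i,\boldsymbol{\beta})}{h(\boldsymbol{x}_i,\boldsymbol{\beta})} & \sum_{i=1}^r\nabla_{\boldsymbol{\beta}}h(\boldsymbol{x}_i,\boldsymbol{\beta})\\ \sum_{i=1}^r\nabla_{\boldsymbol{\beta}}'h(\boldsymbol{x}_i,\boldsymbol{\beta}) & \sum_{i=1}^r\frac{h(\boldsymbol{x}_i,\boldsymbol{\beta})}{\mu}\end{bmatrix},$$ and suppose it is nonsingular, with inverse $V=V(\mu)$ (the asymptotic variance-covariance matrix of the MLE of $(\boldsymbol{\beta},\mu)$). Then, with $\boldsymbol{\beta}$ and the $\boldsymbol{x}_i$ held fixed, each of the first $q$ diagonal entries of $V(\mu)$ (the asymptotic variances of the components of $\hat{\boldsymbol{\beta}}$) is a nonincreasing function of $\mu\in(0,\infty)$, while the last diagonal entry of $V(\mu)$ (the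 asymptotic variance of $\hat\mu$) is a nondecreasing function of $\mu\in(0,\infty)$.
   Context: Model: observations $y_i\sim\mathrm{Bin}(n_i,p_i)$, $i=1,\dots,r$, independent, with $p_i=h(\boldsymbol{x}_i,\boldsymbol{\beta})$ for a known link-type function $h$, where the sizes $n_i$ are unknown and are independent Poisson random variables with common mean $\mu$; hence marginally $y_i\sim\mathrm{Poisson}(\mu h(\boldsymbol{x}_i,\boldsymbol{\beta}))$, and $I_r(\boldsymbol{\beta},\mu)$ above is the Fisher information matrix for $(\boldsymbol{\beta},\mu)$ in this model. The prime denotes transpose. *)

theory Defs
  imports "HOL-Analysis.Analysis"
begin

definition grad :: "(real^'q \<Rightarrow> real) \<Rightarrow> real^'q \<Rightarrow> real^'q" where
  "grad f b = (THE D. GDERIV f b :> D)"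

text \<open>Indices are 'q option: Some j (j :: 'q) are the beta-coordinates, None is the last (mu) coordinate.\<close>
definition fisher_info ::
  "('x \<Rightarrow> real^'q \<Rightarrow> real) \<Rightarrow> (nat \<Rightarrow> 'x) \<Rightarrow> nat \<Rightarrow> real^'q \<Rightarrow> real
     \<Rightarrow> real^('q option)^('q option)" where
  "fisher_info h xs r \<beta> \<mu> = (\<chi> a c.
     (case (a, c) of
        (Some j, Some k) \<Rightarrow> (\<Sum>i=1..r. \<mu> * (grad (h (xs i)) \<beta> $ j) * (grad (h (xs i)) \<beta> $ k) / h (xs i) \<beta>)
      | (Some j, None) \<Rightarrow> (\<Sum>i=1..r. grad (h (xs i)) \<beta> $ j)
      | (None, Some k) \<Rightarrow> (\<Sum>i=1..r. grad (h (xs i)) \<beta> $ k)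
      | (None, None) \<Rightarrow> (\<Sum>i=1..r. h (xs i) \<beta> / \<mu>)))"

end

theory Submission
  imports Defs
begin

lemma matrix_inv_eqI:
  fixes A :: "real^'n^'n"
  assumes "A ** B = mat 1" "B ** A = mat 1"
  shows "matrix_inv A = B"
proof -
  have inv: "invertible A" using assms unfolding invertible_def by blast
  have "A ** matrix_inv A = mat 1 \<and> matrix_inv A ** A = mat 1"
    using inv unfolding invertible_def matrix_inv_def by (rule someI_ex)
  then have "matrix_inv A ** A = mat 1" by blast
  then have "matrix_inv A = matrix_inv A ** (A ** B)" using assms by simp
  also have "\<dots> = B" by (simp add: matrix_mul_assoc \<open>matrix_inv A ** A = mat 1\<close>)
  finally show ?thesis .
qed

lemma matrix_inv_right:
  fixes A :: "real^'n^'n"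
  assumes "invertible A"
  shows "A ** matrix_inv A = mat 1 \<and> matrix_inv A ** A = mat 1"
  using assms unfolding invertible_def matrix_inv_def by (rule someI_ex)

lemma quad_sum:
  fixes y :: "'a \<Rightarrow> real" and v :: "nat \<Rightarrow> 'a \<Rightarrow> real" and w :: "nat \<Rightarrow> real"
  shows "(\<Sum>c\<in>U. y c * (\<Sum>b\<in>U. (\<Sum>i\<in>S. v i c * v i b / w i) * y b))
       = (\<Sum>i\<in>S. (\<Sum>c\<in>U. y c * v i c)^2 / w i)"
proof -
  have "(\<Sum>c\<in>U. y c * (\<Sum>b\<in>U. (\<Sum>i\<in>S. v i c * v i b / w i) * y b))
      = (\<Sum>c\<in>U. \<Sum>b\<in>U. \<Sum>i\<in>S. (y c * v i c) * (v i b * y b) / w i)"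
    unfolding sum_distrib_left sum_distrib_right by (intro sum.cong refl) simp
  also have "\<dots> = (\<Sum>i\<in>S. \<Sum>c\<in>U. \<Sum>b\<in>U. (y c * v i c) * (v i b * y b) / w i)"
    by (subst sum.swap) (rule sum.cong[OF refl], rule sum.swap)
  also have "\<dots> = (\<Sum>i\<in>S. (\<Sum>c\<in>U. y c * v i c)^2 / w i)"
    unfolding power2_eq_square sum_product sum_divide_distrib by (intro sum.cong refl) (simp add: mult.commute)
  finally show ?thesis .
qed

theorem mainTheorem1:
  fixes h :: "'x \<Rightarrow> real^'q \<Rightarrow> real" and xs :: "nat \<Rightarrow> 'x" and r :: nat and \<beta> :: "real^'q"
  assumes h_range: "\<And>x b. 0 < h x b \<and> h x b < 1"
    and h_diff: "\<And>x b. h x differentiable (at b)"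
    and nonsing: "\<And>\<mu>. \<mu> > 0 \<Longrightarrow> invertible (fisher_info h xs r \<beta> \<mu>)"
  shows "(\<forall>j::'q. antimono_on {0<..}
            (\<lambda>\<mu>. matrix_inv (fisher_info h xs r \<beta> \<mu>) $ Some j $ Some j))
       \<and> mono_on {0<..} (\<lambda>\<mu>. matrix_inv (fisher_info h xs r \<beta> \<mu>) $ None $ None)"
proof -
  define g where "g i = grad (h (xs i)) \<beta>" for i
  define hv where "hv i = h (xs i) \<beta>" for i
  define v where "v i a = (case a of Some j \<Rightarrow> g i $ j | None \<Rightarrow> hv i)" for i a
  define M where "M = fisher_info h xs r \<beta> 1"
  define N where "N = matrix_inv M"
  have hvpos: "hv i > 0" for i using h_range unfolding hv_def by blast
  have hne: "h x b \<noteq> 0" for x b using h_range[of x b] by simp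
  have MN: "M ** N = mat 1" "N ** M = mat 1"
    using matrix_inv_right[OF nonsing[of 1]] unfolding M_def N_def by auto
  have Meq: "M $ a $ c = (\<Sum>i=1..r. v i a * v i c / hv i)" for a c
  proof (cases a; cases c)
    show "a = None \<Longrightarrow> c = None \<Longrightarrow> ?thesis"
      by (auto simp: hne M_def fisher_info_def v_def hv_def g_def power2_eq_square intro!: sum.cong)
  next
    fix k assume "a = None" "c = Some k" then show ?thesis
      by (auto simp: hne M_def fisher_info_def v_def hv_def g_def intro!: sum.cong)
  next
    fix k assume "a = Some k" "c = None" then show ?thesis
      by (auto simp: hne M_def fisher_info_def v_def hv_def g_def intro!: sum.cong)
  next
    fix j k assume "a = Some j" "c = Some k" then show ?thesis
      by (auto simp: M_def fisher_info_def v_def hv_def g_def intro!: sum.cong)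
  qed
  have diag_nonneg: "N $ a $ a \<ge> 0" for a
  proof -
    have col: "(\<Sum>b\<in>UNIV. M $ c $ b * N $ b $ a) = (if c = a then 1 else 0)" for c
      using arg_cong[OF MN(1), of "\<lambda>X. X $ c $ a"]
      by (simp add: matrix_matrix_mult_def mat_def)
    have "(\<Sum>c\<in>UNIV. N $ c $ a * (\<Sum>b\<in>UNIV. M $ c $ b * N $ b $ a)) = N $ a $ a"
      by (simp add: col if_distrib cong: if_cong)
    moreover have "(\<Sum>c\<in>UNIV. N $ c $ a * (\<Sum>b\<in>UNIV. M $ c $ b * N $ b $ a))
        = (\<Sum>i\<in>{1..r}. (\<Sum>c\<in>UNIV. N $ c $ a * v i c)^2 / hv i)"
      unfolding Meq by (rule quad_sum)
    moreover have "(\<Sum>i\<in>{1..r}. (\<Sum>c\<in>UNIV. N $ c $ a * v i c)^2 / hv i) \<ge> 0"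
      using hvpos by (intro sum_nonneg divide_nonneg_pos) auto
    ultimately show ?thesis by simp
  qed
  have Vform: "matrix_inv (fisher_info h xs r \<beta> \<mu>) $ a $ c
      = (case a of Some _ \<Rightarrow> 1 | None \<Rightarrow> \<mu>) * N $ a $ c * (case c of Some _ \<Rightarrow> 1/\<mu> | None \<Rightarrow> 1)"
    if mu: "\<mu> > 0" for \<mu> a c
  proof -
    define d1 where "d1 a = (case a of Some _ \<Rightarrow> \<mu> | None \<Rightarrow> 1)" for a :: "'q option"
    define d2 where "d2 a = (case a of Some _ \<Rightarrow> 1 | None \<Rightarrow> 1/\<mu>)" for a :: "'q option"
    define e2 where "e2 a = (case a of Some _ \<Rightarrow> 1 | None \<Rightarrow> \<mu>)" for a :: "'q option"
    define e1 where "e1 a = (case a of Some _ \<Rightarrow> 1/\<mu> | None \<Rightarrow> 1)" for a :: "'q option"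
    have de2: "d2 b * e2 b = 1" for b using mu by (cases b) (auto simp: d2_def e2_def)
    have de1: "e1 b * d1 b = 1" for b using mu by (cases b) (auto simp: d1_def e1_def)
    have F: "fisher_info h xs r \<beta> \<mu> $ a $ b = d1 a * M $ a $ b * d2 b" for a b
      using mu by (cases a; cases b) (auto simp: M_def fisher_info_def d1_def d2_def
          sum_distrib_left sum_divide_distrib mult.assoc)
    define W where "W = (\<chi> a c. e2 a * N $ a $ c * e1 c)"
    have "fisher_info h xs r \<beta> \<mu> ** W = mat 1"
    proof -
      have "(fisher_info h xs r \<beta> \<mu> ** W) $ a $ c = mat 1 $ a $ c" for a c
      proof -
        have "(fisher_info h xs r \<beta> \<mu> ** W) $ a $ c
            = (\<Sum>b\<in>UNIV. d1 a * (M $ a $ b * N $ b $ c) * e1 c * (d2 b * e2 b))"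
          by (simp add: matrix_matrix_mult_def F W_def mult_ac)
        also have "\<dots> = d1 a * (M ** N) $ a $ c * e1 c"
          by (simp add: de2 matrix_matrix_mult_def sum_distrib_left sum_distrib_right)
        also have "\<dots> = mat 1 $ a $ c"
          using de1[of a] by (auto simp add: MN mat_def mult.commute)
        finally show ?thesis .
      qed
      then show ?thesis by (simp add: vec_eq_iff)
    qed
    moreover have "W ** fisher_info h xs r \<beta> \<mu> = mat 1"
    proof -
      have "(W ** fisher_info h xs r \<beta> \<mu>) $ a $ c = mat 1 $ a $ c" for a c
      proof -
        have "(W ** fisher_info h xs r \<beta> \<mu>) $ a $ c
            = (\<Sum>b\<in>UNIV. e2 a * (N $ a $ b * M $ b $ c) * d2 c * (e1 b * d1 b))"
          by (simp add: matrix_matrix_mult_def F W_def mult_ac)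
        also have "\<dots> = e2 a * (N ** M) $ a $ c * d2 c"
          by (simp add: de1 matrix_matrix_mult_def sum_distrib_left sum_distrib_right)
        also have "\<dots> = mat 1 $ a $ c"
          using de2[of a] by (auto simp add: MN mat_def mult.commute)
        finally show ?thesis .
      qed
      then show ?thesis by (simp add: vec_eq_iff)
    qed
    ultimately have "matrix_inv (fisher_info h xs r \<beta> \<mu>) = W" by (rule matrix_inv_eqI)
    then show ?thesis by (simp add: W_def e1_def e2_def)
  qed
  have A: "antimono_on {0<..} (\<lambda>\<mu>. matrix_inv (fisher_info h xs r \<beta> \<mu>) $ Some j $ Some j)" for j
  proof (rule monotone_onI)
    fix x y :: real assume "x \<in> {0<..}" "y \<in> {0<..}" "x \<le> y"
    then show "matrix_inv (fisher_info h xs r \<beta> y) $ Some j $ Some j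
        \<le> matrix_inv (fisher_info h xs r \<beta> x) $ Some j $ Some j"
      using diag_nonneg[of "Some j"]
      by (simp add: Vform divide_left_mono)
  qed
  have B: "mono_on {0<..} (\<lambda>\<mu>. matrix_inv (fisher_info h xs r \<beta> \<mu>) $ None $ None)"
  proof (rule mono_onI)
    fix x y :: real assume "x \<in> {0<..}" "y \<in> {0<..}" "x \<le> y"
    then show "matrix_inv (fisher_info h xs r \<beta> x) $ None $ None
        \<le> matrix_inv (fisher_info h xs r \<beta> y) $ None $ None"
      using diag_nonneg[of None]
      by (simp add: Vform mult_right_mono)
  qed
  show ?thesis using A B by blast
qed

end
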